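(* Let $R$ be a non-associative ring with pairwise commuting additive bijections $\sigma_1,\ldots,\sigma_n$ respecting $1$. If $R$ is left (right) Noetherian, then so is $R[X_1^\pm,\ldots,X_n^\pm;\sigma_1,\ldots,\sigma_n]$.
   Context: All rings are unital; a non-associative ring is a ring that is not necessarily associative. Left (right) Noetherian means satisfying the ascending chain condition on left (right) ideals. For a non-associative ring $R$ and an additive bijection $\sigma$ of $R$ with $\sigma(1)=1$, the non-associative skew Laurent polynomial ring $R[X^\pm;\sigma]$ is the additive group of finite formal sums $\sum_{i\in\mathbb{Z}} r_iX^i$ ($r_i\in R$) with multiplication given by the biadditive extension of $(rX^m)(sX^n)=(r\sigma^m(s))X^{m+n}$ for $r,s\in R$, $m,n\in\mathbb{Z}$. Given pairwise commuting additive bijections $\sigma_1,\ldots,\sigma_n$ of $R$ respecting $1$, the iterated ring $R[X_1^\pm,\ldots,X_n^\pm;\sigma_1,\ldots,\sigma_n]$ is constructed as follows: set $S_1 := R[X_1^\pm;\sigma_1]$; once $S_i$ is constructed for $i<n$, set $S_{i+1}:=S_i[X_{i+1}^\pm;\widehat{\sigma}_{i+1}]$, where $\widehat{\sigma}_{i+1}$ is the additive bijection on $S_i$ (respecting $1$) defined by $\widehat{\sigma}_{i+1}(rX_1^{m_1}\cdots X_i^{m_i})=\sigma_{i+1}(r)X_1^{m_1}\cdots X_i^{m_i}$. The resulting ring $S_n = R[X_1^\pm;\sigma_1]\cdots[X_n^\pm;\widehat{\sigma}_n]$ is denoted $R[X_1^\pm,\ldots,X_n^\pm;\sigma_1,\ldots,\sigma_n]$.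 *)

theory Defs
  imports Main "HOL-Library.Function_Algebras"
begin

definition nonassoc_ring :: "('a::ab_group_add \<Rightarrow> 'a \<Rightarrow> 'a) \<Rightarrow> 'a \<Rightarrow> bool" where
  "nonassoc_ring m one \<longleftrightarrow>
     (\<forall>x y z. m x (y + z) = m x y + m x z) \<and>
     (\<forall>x y z. m (x + y) z = m x z + m y z) \<and>
     (\<forall>x. m one x = x \<and> m x one = x)"

definition additive :: "('a::ab_group_add \<Rightarrow> 'a) \<Rightarrow> bool" where
  "additive s \<longleftrightarrow> (\<forall>x y. s (x + y) = s x + s y)"

definition left_ideal :: "'b::ab_group_add set \<Rightarrow> ('b \<Rightarrow> 'b \<Rightarrow> 'b) \<Rightarrow> 'b set \<Rightarrow> bool" where
  "left_ideal C m I \<longleftrightarrow> I \<subseteq> C \<and> 0 \<in> I \<and> (\<forall>x\<in>I. \<forall>y\<in>I. x + y \<in> I) \<and>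
     (\<forall>x\<in>I. - x \<in> I) \<and> (\<forall>r\<in>C. \<forall>x\<in>I. m r x \<in> I)"

definition right_ideal :: "'b::ab_group_add set \<Rightarrow> ('b \<Rightarrow> 'b \<Rightarrow> 'b) \<Rightarrow> 'b set \<Rightarrow> bool" where
  "right_ideal C m I \<longleftrightarrow> I \<subseteq> C \<and> 0 \<in> I \<and> (\<forall>x\<in>I. \<forall>y\<in>I. x + y \<in> I) \<and>
     (\<forall>x\<in>I. - x \<in> I) \<and> (\<forall>r\<in>C. \<forall>x\<in>I. m x r \<in> I)"

definition left_noetherian :: "'b::ab_group_add set \<Rightarrow> ('b \<Rightarrow> 'b \<Rightarrow> 'b) \<Rightarrow> bool" where
  "left_noetherian C m \<longleftrightarrow>
     (\<forall>I :: nat \<Rightarrow> 'b set. (\<forall>k. left_ideal C m (I k)) \<and> (\<forall>k. I k \<subseteq> I (Suc k)) \<longrightarrow>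
        (\<exists>N. \<forall>k\<ge>N. I k = I N))"

definition right_noetherian :: "'b::ab_group_add set \<Rightarrow> ('b \<Rightarrow> 'b \<Rightarrow> 'b) \<Rightarrow> bool" where
  "right_noetherian C m \<longleftrightarrow>
     (\<forall>I :: nat \<Rightarrow> 'b set. (\<forall>k. right_ideal C m (I k)) \<and> (\<forall>k. I k \<subseteq> I (Suc k)) \<longrightarrow>
        (\<exists>N. \<forall>k\<ge>N. I k = I N))"

definition zpow :: "('b \<Rightarrow> 'b) \<Rightarrow> int \<Rightarrow> 'b \<Rightarrow> 'b" where
  "zpow s j = (if 0 \<le> j then s ^^ nat j else inv s ^^ nat (- j))"

text \<open>Elements of B[X^\<pm>;s] are finitely supported functions int => B (coefficient of X^j).
  Multiplication is the biadditive extension of (b X^j)(c X^k) = (b s^j(c)) X^(j+k).\<close>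
definition skl_mult :: "('b::comm_monoid_add \<Rightarrow> 'b \<Rightarrow> 'b) \<Rightarrow> ('b \<Rightarrow> 'b) \<Rightarrow>
    (int \<Rightarrow> 'b) \<Rightarrow> (int \<Rightarrow> 'b) \<Rightarrow> (int \<Rightarrow> 'b)" where
  "skl_mult m s f g = (\<lambda>l. \<Sum>(j, k) \<in> {(j, k). f j \<noteq> 0 \<and> g k \<noteq> 0 \<and> j + k = l}.
                              m (f j) (zpow s j (g k)))"

text \<open>An element of S_i is a finitely supported function on exponent lists [m_1,...,m_i]
  (the coefficient of X_1^m_1 ... X_i^m_i); S_0 = R via the empty list.\<close>
definition lcarrier :: "nat \<Rightarrow> (int list \<Rightarrow> 'a::zero) set" where
  "lcarrier i = {F. finite {xs. F xs \<noteq> 0} \<and> (\<forall>xs. F xs \<noteq> 0 \<longrightarrow> length xs = i)}"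

text \<open>Viewing an element of S_(i+1) as a Laurent polynomial in X_(i+1) over S_i, and back.\<close>
definition ldec :: "nat \<Rightarrow> (int list \<Rightarrow> 'a::zero) \<Rightarrow> int \<Rightarrow> (int list \<Rightarrow> 'a)" where
  "ldec i F = (\<lambda>j xs. if length xs = i then F (xs @ [j]) else 0)"

definition lenc :: "nat \<Rightarrow> (int \<Rightarrow> (int list \<Rightarrow> 'a::zero)) \<Rightarrow> (int list \<Rightarrow> 'a)" where
  "lenc i H = (\<lambda>ys. if length ys = Suc i then H (last ys) (butlast ys) else 0)"

definition lhat :: "('a \<Rightarrow> 'a) \<Rightarrow> (int list \<Rightarrow> 'a) \<Rightarrow> (int list \<Rightarrow> 'a)" where
  "lhat s h = (\<lambda>xs. s (h xs))"

text \<open>Multiplication of S_i = R[X_1^\<pm>,...,X_i^\<pm>; sigma 0, ..., sigma (i-1)];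
  the variable X_(i+1) uses the bijection sigma i.\<close>
fun lmult :: "('a::ab_group_add \<Rightarrow> 'a \<Rightarrow> 'a) \<Rightarrow> (nat \<Rightarrow> 'a \<Rightarrow> 'a) \<Rightarrow> nat \<Rightarrow>
    (int list \<Rightarrow> 'a) \<Rightarrow> (int list \<Rightarrow> 'a) \<Rightarrow> (int list \<Rightarrow> 'a)" where
  "lmult m \<sigma> 0 = (\<lambda>F G xs. if xs = [] then m (F []) (G []) else 0)"
| "lmult m \<sigma> (Suc i) =
     (\<lambda>F G. lenc i (skl_mult (lmult m \<sigma> i) (lhat (\<sigma> i)) (ldec i F) (ldec i G)))"

end

theory Submission
  imports Defs
begin


lemma fun_diff_apply: "((f::'x \<Rightarrow> 'b::ab_group_add) - g) x = f x - g x"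
  by (simp add: fun_diff_def)
lemma fun_uminus_apply: "(- (f::'x \<Rightarrow> 'b::ab_group_add)) x = - f x"
  by (simp add: fun_Compl_def)

lemma finite_int_bounded:
  assumes "finite (S::int set)" shows "\<exists>k. \<forall>x\<in>S. \<bar>x\<bar> \<le> k"
  using assms
proof (induction S rule: finite_induct)
  case empty then show ?case by auto
next
  case (insert a S)
  then obtain k where "\<forall>x\<in>S. \<bar>x\<bar> \<le> k" by auto
  then show ?case by (intro exI[of _ "max k \<bar>a\<bar>"]) auto
qed

lemma funpow_cancel:
  fixes f g :: "'x \<Rightarrow> 'x"
  assumes "\<And>x. g (f x) = x" shows "(g ^^ n) ((f ^^ n) x) = x"
proof (induction n arbitrary: x)
  case 0 then show ?case by (simp del: funpow.simps add: funpow_0)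
next
  case (Suc n)
  have e1: "(f ^^ Suc n) x = f ((f^^n) x)" by simp
  have e2: "\<And>y. (g ^^ Suc n) y = (g^^n) (g y)" by (simp only: funpow_Suc_right comp_apply)
  have "(g ^^ Suc n) ((f ^^ Suc n) x) = (g ^^ n) (g (f ((f ^^ n) x)))"
    by (simp only: e1 e2)
  also have "\<dots> = x" using assms Suc by simp
  finally show ?case .
qed

lemma funpow_fix: "f a = a \<Longrightarrow> (f ^^ n) a = a"
  by (induction n) auto

lemma funpow_into: "(\<And>x. x \<in> C \<Longrightarrow> f x \<in> C) \<Longrightarrow> x \<in> C \<Longrightarrow> (f ^^ n) x \<in> C"
  by (induction n) auto

locale sbij =
  fixes s :: "'b \<Rightarrow> 'b" and C :: "'b set" and z :: 'b and e :: 'b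
  assumes bij: "bij s" and s_z: "s z = z" and s_e: "s e = e"
    and s_C: "\<And>x. x \<in> C \<Longrightarrow> s x \<in> C" and inv_C: "\<And>x. x \<in> C \<Longrightarrow> inv s x \<in> C"
begin

lemma inv_fix: "s a = a \<Longrightarrow> inv s a = a"
  using bij by (metis bij_is_inj inv_f_f)

lemma zpow_0: "zpow s 0 = id" by (simp add: zpow_def)

lemma zpow_z: "zpow s k z = z"
  using s_z inv_fix[OF s_z] by (simp add: zpow_def funpow_fix)

lemma zpow_e: "zpow s k e = e"
  using s_e inv_fix[OF s_e] by (simp add: zpow_def funpow_fix)

lemma zpow_C: "x \<in> C \<Longrightarrow> zpow s k x \<in> C"
  by (simp add: zpow_def funpow_into s_C inv_C)

lemma zpow_inv: "zpow s (-k) (zpow s k x) = x"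
proof -
  have a: "\<And>x. inv s (s x) = x" using bij by (simp add: bij_is_inj)
  have b: "\<And>x. s (inv s x) = x" using bij by (simp add: bij_is_surj surj_f_inv_f)
  show ?thesis
  proof (cases "k = 0")
    case True then show ?thesis by (simp add: zpow_def)
  next
    case False
    then show ?thesis
      by (cases "k > 0") (auto simp: zpow_def funpow_cancel[where f=s and g="inv s", OF a] funpow_cancel[where g=s and f="inv s", OF b])
  qed
qed

end


definition sc :: "'b::zero set \<Rightarrow> (int \<Rightarrow> 'b) set" where
  "sc C = {f. finite {j. f j \<noteq> 0} \<and> (\<forall>j. f j \<in> C)}"

definition sgl :: "int \<Rightarrow> 'b::zero \<Rightarrow> int \<Rightarrow> 'b" where
  "sgl k a = (\<lambda>l. if l = k then a else 0)"

definition Lset :: "(int \<Rightarrow> 'b::zero) set \<Rightarrow> nat \<Rightarrow> 'b set" where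
  "Lset I d = {p 0 | p. p \<in> I \<and> (\<forall>j. p j \<noteq> 0 \<longrightarrow> 0 \<le> j \<and> j \<le> int d)}"

lemma skl_left_single:
  assumes "\<forall>x. m 0 x = 0" "\<forall>x. m x 0 = 0" "zpow s k 0 = 0"
  shows "skl_mult m s (sgl k a) g = (\<lambda>l. m a (zpow s k (g (l - k))))"
proof
  fix l
  show "skl_mult m s (sgl k a) g l = m a (zpow s k (g (l - k)))"
  proof (cases "a \<noteq> 0 \<and> g (l - k) \<noteq> 0")
    case True
    then have E: "{(j, k'). sgl k a j \<noteq> 0 \<and> g k' \<noteq> 0 \<and> j + k' = l} = {(k, l - k)}"
      by (auto simp: sgl_def split: if_splits)
    show ?thesis unfolding skl_mult_def E by (simp add: sgl_def)
  next
    case False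
    then have E: "{(j, k'). sgl k a j \<noteq> 0 \<and> g k' \<noteq> 0 \<and> j + k' = l} = {}"
      by (auto simp: sgl_def)
    show ?thesis unfolding skl_mult_def E using False assms by auto
  qed
qed

lemma skl_right_single:
  assumes "\<forall>x. m 0 x = 0" "\<forall>x. m x 0 = 0" "\<forall>j. zpow s j 0 = 0"
  shows "skl_mult m s f (sgl k b) = (\<lambda>l. m (f (l - k)) (zpow s (l - k) b))"
proof
  fix l
  show "skl_mult m s f (sgl k b) l = m (f (l - k)) (zpow s (l - k) b)"
  proof (cases "b \<noteq> 0 \<and> f (l - k) \<noteq> 0")
    case True
    then have E: "{(j, k'). f j \<noteq> 0 \<and> sgl k b k' \<noteq> 0 \<and> j + k' = l} = {(l - k, k)}"
      by (auto simp: sgl_def split: if_splits)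
    show ?thesis unfolding skl_mult_def E by (simp add: sgl_def)
  next
    case False
    then have E: "{(j, k'). f j \<noteq> 0 \<and> sgl k b k' \<noteq> 0 \<and> j + k' = l} = {}"
      by (auto simp: sgl_def)
    show ?thesis unfolding skl_mult_def E using False assms by auto
  qed
qed

lemma skl_zero_r: "skl_mult m s f 0 = 0"
  by (simp add: skl_mult_def fun_eq_iff)

lemma skl_zero_l: "skl_mult m s 0 g = 0"
  by (simp add: skl_mult_def fun_eq_iff)

lemma sum_in_C:
  assumes "0 \<in> C" "\<forall>x\<in>C. \<forall>y\<in>C. x + y \<in> C" "\<forall>x\<in>A. h x \<in> C"
  shows "sum h A \<in> C"
proof (cases "finite A")
  case True
  then show ?thesis using assms(3)
    by (induction A rule: finite_induct) (auto simp: assms(1,2))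
next
  case False then show ?thesis using assms(1) by simp
qed

lemma skl_closed:
  assumes C0: "0 \<in> C" and Cadd: "\<forall>x\<in>C. \<forall>y\<in>C. x + y \<in> C"
    and mC: "\<forall>x\<in>C. \<forall>y\<in>C. m x y \<in> C"
    and zC: "\<forall>j. \<forall>x\<in>C. zpow s j x \<in> C"
    and f: "f \<in> sc C" and g: "g \<in> sc C"
  shows "skl_mult m s f g \<in> sc C"
proof -
  have vals: "\<forall>l. skl_mult m s f g l \<in> C"
    unfolding skl_mult_def
    using f g by (auto intro!: sum_in_C[OF C0 Cadd] simp: sc_def mC zC)
  have "{l. skl_mult m s f g l \<noteq> 0} \<subseteq> (\<lambda>(j, k). j + k) ` ({j. f j \<noteq> 0} \<times> {k. g k \<noteq> 0})"
  proof
    fix l assume "l \<in> {l. skl_mult m s f g l \<noteq> 0}"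
    then have "{(j, k). f j \<noteq> 0 \<and> g k \<noteq> 0 \<and> j + k = l} \<noteq> {}"
    proof (intro notI)
      assume "l \<in> {l. skl_mult m s f g l \<noteq> 0}" and E: "{(j, k). f j \<noteq> 0 \<and> g k \<noteq> 0 \<and> j + k = l} = {}"
      then have "skl_mult m s f g l = 0" unfolding skl_mult_def by simp
      then show False using \<open>l \<in> {l. skl_mult m s f g l \<noteq> 0}\<close> by simp
    qed
    then show "l \<in> (\<lambda>(j, k). j + k) ` ({j. f j \<noteq> 0} \<times> {k. g k \<noteq> 0})" by force
  qed
  moreover have "finite ((\<lambda>(j, k). j + k) ` ({j. f j \<noteq> 0} \<times> {k. g k \<noteq> 0}))"
    using f g by (simp add: sc_def)
  ultimately show ?thesis using vals by (simp add: sc_def finite_subset)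
qed

lemma reconstruct:
  fixes I J :: "(int \<Rightarrow> 'b::ab_group_add) set" and T :: "int \<Rightarrow> 'b \<Rightarrow> 'b"
  assumes IJ: "I \<subseteq> J" and Jsc: "J \<subseteq> sc C"
    and I0: "0 \<in> I" and Iadd: "\<forall>x\<in>I. \<forall>y\<in>I. x + y \<in> I"
    and Jdiff: "\<forall>x\<in>J. \<forall>y\<in>J. x - y \<in> J"
    and Ish: "\<forall>p\<in>I. \<forall>k. (\<lambda>l. T k (p (l - k))) \<in> I"
    and Jsh: "\<forall>p\<in>J. \<forall>k. (\<lambda>l. T k (p (l - k))) \<in> J"
    and T0: "\<forall>k. T k 0 = 0" and Tinv: "\<forall>k x. T (-k) (T k x) = x"
    and L: "\<forall>d. Lset I d = Lset J d"
  shows "I = J"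
proof -
  have main: "\<forall>p\<in>J. \<forall>lo. (\<forall>j. p j \<noteq> 0 \<longrightarrow> lo \<le> j \<and> j \<le> lo + int w) \<longrightarrow> p \<in> I" for w
  proof (induction w rule: less_induct)
    case (less w)
    show ?case
    proof (intro ballI allI impI)
      fix p lo assume pJ: "p \<in> J" and sp: "\<forall>j. p j \<noteq> 0 \<longrightarrow> lo \<le> j \<and> j \<le> lo + int w"
      define q where "q = (\<lambda>l. T (-lo) (p (l - (-lo))))"
      have qJ: "q \<in> J" unfolding q_def by (rule Jsh[rule_format, OF pJ])
      have sq: "\<forall>j. q j \<noteq> 0 \<longrightarrow> 0 \<le> j \<and> j \<le> int w"
      proof (intro allI impI)
        fix j assume "q j \<noteq> 0"
        then have "p (j + lo) \<noteq> 0" using T0 by (auto simp: q_def)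
        then show "0 \<le> j \<and> j \<le> int w" using sp by force
      qed
      then have "q 0 \<in> Lset J w" using qJ by (auto simp: Lset_def)
      then have "q 0 \<in> Lset I w" using L by simp
      then obtain q' where q'I: "q' \<in> I" and sq': "\<forall>j. q' j \<noteq> 0 \<longrightarrow> 0 \<le> j \<and> j \<le> int w"
        and q'0: "q' 0 = q 0"
        unfolding Lset_def by (smt (verit) mem_Collect_eq)
      define r where "r = q - q'"
      have rJ: "r \<in> J" using Jdiff qJ q'I IJ by (auto simp: r_def)
      have sr: "\<forall>j. r j \<noteq> 0 \<longrightarrow> 1 \<le> j \<and> j \<le> int w"
      proof (intro allI impI)
        fix j assume "r j \<noteq> 0"
        then have "q j \<noteq> 0 \<or> q' j \<noteq> 0" and "j \<noteq> 0"
          using q'0 by (auto simp: r_def fun_diff_apply)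
        then show "1 \<le> j \<and> j \<le> int w" using sq sq' by force
      qed
      have rI: "r \<in> I"
      proof (cases "w = 0")
        case True
        then have "r = 0" using sr by (force simp: fun_eq_iff)
        then show ?thesis using I0 by simp
      next
        case False
        then have "w - 1 < w" by simp
        moreover have "\<forall>j. r j \<noteq> 0 \<longrightarrow> 1 \<le> j \<and> j \<le> 1 + int (w - 1)"
          using sr False by auto
        ultimately show ?thesis using less rJ by blast
      qed
      have "q = r + q'" by (simp add: r_def)
      then have qI: "q \<in> I" using Iadd rI q'I by simp
      have "p = (\<lambda>l. T lo (q (l - lo)))"
        using Tinv[rule_format, of "-lo"] by (simp add: q_def)
      then show "p \<in> I" using Ish qI by metis
    qed
  qed
  show ?thesis
  proof
    show "J \<subseteq> I"
    proof
      fix p assume pJ: "p \<in> J"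
      then have "finite {j. p j \<noteq> 0}" using Jsc by (auto simp: sc_def)
      then obtain k where k: "\<forall>x\<in>{j. p j \<noteq> 0}. \<bar>x\<bar> \<le> k" using finite_int_bounded by blast
      have "\<forall>j. p j \<noteq> 0 \<longrightarrow> -k \<le> j \<and> j \<le> -k + int (nat (2 * k))"
        using k by force
      then show "p \<in> I" using main pJ by blast
    qed
  qed (rule IJ)
qed


lemma Lset_intro: "p \<in> I \<Longrightarrow> \<forall>j. p j \<noteq> 0 \<longrightarrow> 0 \<le> j \<and> j \<le> int d \<Longrightarrow> x = p 0 \<Longrightarrow> x \<in> Lset I d"
  unfolding Lset_def by blast

lemma Lset_mono_I: "I \<subseteq> J \<Longrightarrow> Lset I d \<subseteq> Lset J d"
  unfolding Lset_def by blast

lemma Lset_mono_d: "d \<le> d' \<Longrightarrow> Lset I d \<subseteq> Lset I d'"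
  unfolding Lset_def by force

lemma acc_generic:
  fixes P :: "(int \<Rightarrow> 'b::ab_group_add) set \<Rightarrow> bool" and Q :: "'b set \<Rightarrow> bool"
    and T :: "int \<Rightarrow> 'b \<Rightarrow> 'b"
  assumes Qn: "\<forall>A::nat \<Rightarrow> 'b set. (\<forall>k. Q (A k)) \<and> (\<forall>k. A k \<subseteq> A (Suc k)) \<longrightarrow> (\<exists>N. \<forall>k\<ge>N. A k = A N)"
    and PQ: "\<And>I d. P I \<Longrightarrow> Q (Lset I d)"
    and Psc: "\<And>I. P I \<Longrightarrow> I \<subseteq> sc C"
    and P0: "\<And>I. P I \<Longrightarrow> 0 \<in> I"
    and Padd: "\<And>I. P I \<Longrightarrow> \<forall>x\<in>I. \<forall>y\<in>I. x + y \<in> I"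
    and Pdiff: "\<And>I. P I \<Longrightarrow> \<forall>x\<in>I. \<forall>y\<in>I. x - y \<in> I"
    and Psh: "\<And>I. P I \<Longrightarrow> \<forall>p\<in>I. \<forall>k. (\<lambda>l. T k (p (l - k))) \<in> I"
    and T0: "\<forall>k. T k 0 = 0" and Tinv: "\<forall>k x. T (-k) (T k x) = x"
  shows "\<forall>I::nat \<Rightarrow> (int \<Rightarrow> 'b) set. (\<forall>k. P (I k)) \<and> (\<forall>k. I k \<subseteq> I (Suc k)) \<longrightarrow> (\<exists>N. \<forall>k\<ge>N. I k = I N)"
proof (intro allI impI)
  fix I :: "nat \<Rightarrow> (int \<Rightarrow> 'b) set"
  assume asm: "(\<forall>k. P (I k)) \<and> (\<forall>k. I k \<subseteq> I (Suc k))"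
  then have PI: "\<And>k. P (I k)" by blast
  have mono: "I k \<subseteq> I k'" if "k \<le> k'" for k k'
    by (rule lift_Suc_mono_le[of I, OF _ that]) (use asm in blast)
  define A where "A = (\<lambda>k. Lset (I k) k)"
  have "\<forall>k. A k \<subseteq> A (Suc k)"
  proof
    fix k
    have "Lset (I k) k \<subseteq> Lset (I (Suc k)) k" using Lset_mono_I asm by blast
    also have "\<dots> \<subseteq> Lset (I (Suc k)) (Suc k)" by (rule Lset_mono_d) simp
    finally show "A k \<subseteq> A (Suc k)" by (simp add: A_def)
  qed
  moreover have "\<forall>k. Q (A k)" unfolding A_def using PQ PI by blast
  ultimately obtain D where D: "\<forall>k\<ge>D. A k = A D" using Qn by blast
  have "\<forall>d. \<exists>N. \<forall>k\<ge>N. Lset (I k) d = Lset (I N) d"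
  proof
    fix d
    have "\<forall>k. Q (Lset (I k) d)" using PQ PI by blast
    moreover have "\<forall>k. Lset (I k) d \<subseteq> Lset (I (Suc k)) d"
      using Lset_mono_I asm by blast
    ultimately show "\<exists>N. \<forall>k\<ge>N. Lset (I k) d = Lset (I N) d"
      using Qn[rule_format, of "\<lambda>k. Lset (I k) d"] by blast
  qed
  then obtain Nf where Nf: "\<And>d k. k \<ge> Nf d \<Longrightarrow> Lset (I k) d = Lset (I (Nf d)) d"
    by metis
  define N where "N = max D (Max (Nf ` {..D}))"
  have ND: "D \<le> N" by (simp add: N_def)
  have NNf: "d \<le> D \<Longrightarrow> Nf d \<le> N" for d
    unfolding N_def by (rule order_trans[OF _ max.cobounded2]) (auto intro: Max_ge)
  show "\<exists>N. \<forall>k\<ge>N. I k = I N"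
  proof (intro exI allI impI)
    fix k assume kN: "N \<le> k"
    have Leq: "\<forall>d. Lset (I N) d = Lset (I k) d"
    proof
      fix d
      show "Lset (I N) d = Lset (I k) d"
      proof (cases "d \<le> D")
        case True
        have "Nf d \<le> k" using NNf[OF True] kN by simp
        then have e1: "Lset (I k) d = Lset (I (Nf d)) d" by (rule Nf)
        have e2: "Lset (I N) d = Lset (I (Nf d)) d" by (rule Nf[OF NNf[OF True]])
        show ?thesis by (simp only: e1 e2)
      next
        case False
        have "Lset (I k) d \<subseteq> Lset (I (max d k)) d" by (rule Lset_mono_I[OF mono]) simp
        also have "\<dots> \<subseteq> Lset (I (max d k)) (max d k)" by (rule Lset_mono_d) simp
        also have "\<dots> = A D"
        proof -
          have "max d k \<ge> D" using False by simp
          from D[rule_format, OF this] show ?thesis by (simp only: A_def)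
        qed
        also have "\<dots> \<subseteq> Lset (I N) D" unfolding A_def by (rule Lset_mono_I[OF mono[OF ND]])
        also have "\<dots> \<subseteq> Lset (I N) d" by (rule Lset_mono_d) (use False in simp)
        finally have "Lset (I k) d \<subseteq> Lset (I N) d" .
        moreover have "Lset (I N) d \<subseteq> Lset (I k) d" by (rule Lset_mono_I[OF mono[OF kN]])
        ultimately show ?thesis by blast
      qed
    qed
    show "I k = I N"
      by (rule reconstruct[OF mono[OF kN] Psc[OF PI] P0[OF PI] Padd[OF PI] Pdiff[OF PI]
            Psh[OF PI] Psh[OF PI] T0 Tinv Leq, symmetric])
  qed
qed


locale gen = sbij s C 0 e for s :: "'b::ab_group_add \<Rightarrow> 'b" and C e +
  fixes m :: "'b \<Rightarrow> 'b \<Rightarrow> 'b"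
  assumes C0: "0 \<in> C" and Cadd: "\<forall>x\<in>C. \<forall>y\<in>C. x + y \<in> C" and Cneg: "\<forall>x\<in>C. - x \<in> C"
    and mC: "\<forall>x\<in>C. \<forall>y\<in>C. m x y \<in> C" and m0l: "\<forall>x. m 0 x = 0" and m0r: "\<forall>x. m x 0 = 0"
    and eC: "e \<in> C" and ml: "\<forall>x\<in>C. m e x = x" and mr: "\<forall>x\<in>C. m x e = x"
begin

lemma zC: "\<forall>j. \<forall>x\<in>C. zpow s j x \<in> C" using zpow_C by blast

lemma zz: "\<forall>j. zpow s j 0 = 0" using zpow_z by blast

lemma sgl_sc: "a \<in> C \<Longrightarrow> sgl k a \<in> sc C"
proof -
  assume a: "a \<in> C"
  have "{j. sgl k a j \<noteq> 0} \<subseteq> {k}" by (auto simp: sgl_def)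
  then show ?thesis using a C0 by (auto simp: sc_def sgl_def intro: finite_subset)
qed

lemma sc_C: "p \<in> sc C \<Longrightarrow> p j \<in> C" by (simp add: sc_def)

lemma left_L: "left_ideal (sc C) (skl_mult m s) I \<Longrightarrow> left_ideal C m (Lset I d)"
proof -
  assume LI: "left_ideal (sc C) (skl_mult m s) I"
  have Isc: "I \<subseteq> sc C" and I0: "0 \<in> I" and Iadd: "\<forall>x\<in>I. \<forall>y\<in>I. x + y \<in> I"
    and Ineg: "\<forall>x\<in>I. - x \<in> I" and Imul: "\<forall>r\<in>sc C. \<forall>x\<in>I. skl_mult m s r x \<in> I"
    using LI by (auto simp: left_ideal_def)
  show ?thesis
    unfolding left_ideal_def
  proof (intro conjI ballI)
    show "Lset I d \<subseteq> C" using Isc by (auto simp: Lset_def sc_def)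
    show "0 \<in> Lset I d" using I0 by (intro Lset_intro[of 0]) auto
  next
    fix x y assume "x \<in> Lset I d" "y \<in> Lset I d"
    then obtain p q where "p \<in> I" "q \<in> I" "x = p 0" "y = q 0"
      and "\<forall>j. p j \<noteq> 0 \<longrightarrow> 0 \<le> j \<and> j \<le> int d" "\<forall>j. q j \<noteq> 0 \<longrightarrow> 0 \<le> j \<and> j \<le> int d"
      unfolding Lset_def by blast
    then show "x + y \<in> Lset I d" using Iadd
      by (intro Lset_intro[of "p + q"]) (auto, metis add.right_neutral, metis add.right_neutral)
  next
    fix x assume "x \<in> Lset I d"
    then obtain p where "p \<in> I" "x = p 0"
      and "\<forall>j. p j \<noteq> 0 \<longrightarrow> 0 \<le> j \<and> j \<le> int d"
      unfolding Lset_def by blast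
    then show "- x \<in> Lset I d" using Ineg
      by (intro Lset_intro[of "- p"]) (auto simp: fun_uminus_apply)
  next
    fix r x assume r: "r \<in> C" and "x \<in> Lset I d"
    then obtain p where pI: "p \<in> I" "x = p 0"
      and sp: "\<forall>j. p j \<noteq> 0 \<longrightarrow> 0 \<le> j \<and> j \<le> int d"
      unfolding Lset_def by blast
    have eq: "skl_mult m s (sgl 0 r) p = (\<lambda>l. m r (p l))"
      using skl_left_single[of m s 0 r p] m0l m0r zz by (simp add: zpow_0)
    have "skl_mult m s (sgl 0 r) p \<in> I" using Imul sgl_sc[OF r] pI by blast
    then have "(\<lambda>l. m r (p l)) \<in> I" by (simp only: eq)
    moreover have "\<forall>j. m r (p j) \<noteq> 0 \<longrightarrow> 0 \<le> j \<and> j \<le> int d" using sp m0r by metis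
    ultimately show "m r x \<in> Lset I d" using pI by (intro Lset_intro[of "\<lambda>l. m r (p l)"]) auto
  qed
qed

lemma right_L: "right_ideal (sc C) (skl_mult m s) I \<Longrightarrow> right_ideal C m (Lset I d)"
proof -
  assume LI: "right_ideal (sc C) (skl_mult m s) I"
  have Isc: "I \<subseteq> sc C" and I0: "0 \<in> I" and Iadd: "\<forall>x\<in>I. \<forall>y\<in>I. x + y \<in> I"
    and Ineg: "\<forall>x\<in>I. - x \<in> I" and Imul: "\<forall>r\<in>sc C. \<forall>x\<in>I. skl_mult m s x r \<in> I"
    using LI by (auto simp: right_ideal_def)
  show ?thesis
    unfolding right_ideal_def
  proof (intro conjI ballI)
    show "Lset I d \<subseteq> C" using Isc by (auto simp: Lset_def sc_def)
    show "0 \<in> Lset I d" using I0 by (intro Lset_intro[of 0]) auto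
  next
    fix x y assume "x \<in> Lset I d" "y \<in> Lset I d"
    then obtain p q where "p \<in> I" "q \<in> I" "x = p 0" "y = q 0"
      and "\<forall>j. p j \<noteq> 0 \<longrightarrow> 0 \<le> j \<and> j \<le> int d" "\<forall>j. q j \<noteq> 0 \<longrightarrow> 0 \<le> j \<and> j \<le> int d"
      unfolding Lset_def by blast
    then show "x + y \<in> Lset I d" using Iadd
      by (intro Lset_intro[of "p + q"]) (auto, metis add.right_neutral, metis add.right_neutral)
  next
    fix x assume "x \<in> Lset I d"
    then obtain p where "p \<in> I" "x = p 0"
      and "\<forall>j. p j \<noteq> 0 \<longrightarrow> 0 \<le> j \<and> j \<le> int d"
      unfolding Lset_def by blast
    then show "- x \<in> Lset I d" using Ineg
      by (intro Lset_intro[of "- p"]) (auto simp: fun_uminus_apply)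
  next
    fix r x assume r: "r \<in> C" and "x \<in> Lset I d"
    then obtain p where pI: "p \<in> I" "x = p 0"
      and sp: "\<forall>j. p j \<noteq> 0 \<longrightarrow> 0 \<le> j \<and> j \<le> int d"
      unfolding Lset_def by blast
    have eq: "skl_mult m s p (sgl 0 r) = (\<lambda>l. m (p l) (zpow s l r))"
      using skl_right_single[of m s p 0 r] m0l m0r zz by simp
    have "skl_mult m s p (sgl 0 r) \<in> I" using Imul sgl_sc[OF r] pI by blast
    then have "(\<lambda>l. m (p l) (zpow s l r)) \<in> I" by (simp only: eq)
    moreover have "\<forall>j. m (p j) (zpow s j r) \<noteq> 0 \<longrightarrow> 0 \<le> j \<and> j \<le> int d" using sp m0l by metis
    moreover have "m (p 0) (zpow s 0 r) = m x r" using pI by (simp add: zpow_0)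
    ultimately show "m x r \<in> Lset I d" by (intro Lset_intro[of "\<lambda>l. m (p l) (zpow s l r)"]) auto
  qed
qed

theorem left_step: "left_noetherian C m \<Longrightarrow> left_noetherian (sc C) (skl_mult m s)"
  unfolding left_noetherian_def
proof (rule acc_generic[where P="left_ideal (sc C) (skl_mult m s)" and Q="left_ideal C m"
      and T="zpow s" and C=C])
  show "\<And>I d. left_ideal (sc C) (skl_mult m s) I \<Longrightarrow> left_ideal C m (Lset I d)" by (rule left_L)
  show "\<And>I. left_ideal (sc C) (skl_mult m s) I \<Longrightarrow> I \<subseteq> sc C" by (simp add: left_ideal_def)
  show "\<And>I. left_ideal (sc C) (skl_mult m s) I \<Longrightarrow> 0 \<in> I" by (simp add: left_ideal_def)
  show "\<And>I. left_ideal (sc C) (skl_mult m s) I \<Longrightarrow> \<forall>x\<in>I. \<forall>y\<in>I. x + y \<in> I" by (simp add: left_ideal_def)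
  show "\<And>I. left_ideal (sc C) (skl_mult m s) I \<Longrightarrow> \<forall>x\<in>I. \<forall>y\<in>I. x - y \<in> I"
    unfolding left_ideal_def by (metis diff_conv_add_uminus)
  show "\<forall>k. zpow s k 0 = 0" by (rule zz)
  show "\<forall>k x. zpow s (- k) (zpow s k x) = x" using zpow_inv by blast
  show "\<And>I. left_ideal (sc C) (skl_mult m s) I \<Longrightarrow> \<forall>p\<in>I. \<forall>k. (\<lambda>l. zpow s k (p (l - k))) \<in> I"
  proof (intro ballI allI)
    fix I p k assume LI: "left_ideal (sc C) (skl_mult m s) I" and pI: "p \<in> I"
    have pC: "\<And>j. p j \<in> C" using LI pI by (auto simp: left_ideal_def sc_def)
    have "skl_mult m s (sgl k e) p = (\<lambda>l. m e (zpow s k (p (l - k))))"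
      using skl_left_single[of m s k e p] m0l m0r zz by simp
    also have "\<dots> = (\<lambda>l. zpow s k (p (l - k)))" using ml zC pC by simp
    finally have eq: "skl_mult m s (sgl k e) p = (\<lambda>l. zpow s k (p (l - k)))" .
    have "skl_mult m s (sgl k e) p \<in> I" using LI pI sgl_sc[OF eC] by (auto simp: left_ideal_def)
    then show "(\<lambda>l. zpow s k (p (l - k))) \<in> I" by (simp only: eq)
  qed
qed

theorem right_step: "right_noetherian C m \<Longrightarrow> right_noetherian (sc C) (skl_mult m s)"
  unfolding right_noetherian_def
proof (rule acc_generic[where P="right_ideal (sc C) (skl_mult m s)" and Q="right_ideal C m"
      and T="\<lambda>k x. x" and C=C])
  show "\<And>I d. right_ideal (sc C) (skl_mult m s) I \<Longrightarrow> right_ideal C m (Lset I d)" by (rule right_L)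
  show "\<And>I. right_ideal (sc C) (skl_mult m s) I \<Longrightarrow> I \<subseteq> sc C" by (simp add: right_ideal_def)
  show "\<And>I. right_ideal (sc C) (skl_mult m s) I \<Longrightarrow> 0 \<in> I" by (simp add: right_ideal_def)
  show "\<And>I. right_ideal (sc C) (skl_mult m s) I \<Longrightarrow> \<forall>x\<in>I. \<forall>y\<in>I. x + y \<in> I" by (simp add: right_ideal_def)
  show "\<And>I. right_ideal (sc C) (skl_mult m s) I \<Longrightarrow> \<forall>x\<in>I. \<forall>y\<in>I. x - y \<in> I"
    unfolding right_ideal_def by (metis diff_conv_add_uminus)
  show "\<forall>k. (0::'b) = 0" by simp
  show "\<forall>k (x::'b). x = x" by simp
  show "\<And>I. right_ideal (sc C) (skl_mult m s) I \<Longrightarrow> \<forall>p\<in>I. \<forall>k. (\<lambda>l. p (l - k)) \<in> I"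
  proof (intro ballI allI)
    fix I p k assume LI: "right_ideal (sc C) (skl_mult m s) I" and pI: "p \<in> I"
    have pC: "\<And>j. p j \<in> C" using LI pI by (auto simp: right_ideal_def sc_def)
    have "skl_mult m s p (sgl k e) = (\<lambda>l. m (p (l - k)) (zpow s (l - k) e))"
      using skl_right_single[of m s p k e] m0l m0r zz by simp
    also have "\<dots> = (\<lambda>l. p (l - k))" using mr zpow_e pC by simp
    finally have eq: "skl_mult m s p (sgl k e) = (\<lambda>l. p (l - k))" .
    have "skl_mult m s p (sgl k e) \<in> I" using LI pI sgl_sc[OF eC] by (auto simp: right_ideal_def)
    then show "(\<lambda>l. p (l - k)) \<in> I" by (simp only: eq)
  qed
qed

end


context gen
begin

lemma sc_e: "sgl 0 e \<in> sc C" by (rule sgl_sc[OF eC])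

lemma gen_lid: "f \<in> sc C \<Longrightarrow> skl_mult m s (sgl 0 e) f = f"
proof -
  assume f: "f \<in> sc C"
  have "skl_mult m s (sgl 0 e) f = (\<lambda>l. m e (zpow s 0 (f (l - 0))))"
    using skl_left_single[of m s 0 e f] m0l m0r zz by simp
  also have "\<dots> = f" using ml f by (simp add: zpow_0 sc_def)
  finally show ?thesis .
qed

lemma gen_rid: "f \<in> sc C \<Longrightarrow> skl_mult m s f (sgl 0 e) = f"
proof -
  assume f: "f \<in> sc C"
  have "skl_mult m s f (sgl 0 e) = (\<lambda>l. m (f (l - 0)) (zpow s (l - 0) e))"
    using skl_right_single[of m s f 0 e] m0l m0r zz by simp
  also have "\<dots> = f" using mr f zpow_e by (simp add: sc_def)
  finally show ?thesis .
qed

lemma gen_closed: "f \<in> sc C \<Longrightarrow> g \<in> sc C \<Longrightarrow> skl_mult m s f g \<in> sc C"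
  by (rule skl_closed[OF C0 Cadd mC zC])

end



lemma transfer_left:
  fixes \<phi> :: "'x::ab_group_add \<Rightarrow> 'y::ab_group_add"
  assumes phiC: "\<And>x. x \<in> C1 \<Longrightarrow> \<phi> x \<in> C2" and psiC: "\<And>y. y \<in> C2 \<Longrightarrow> \<psi> y \<in> C1"
    and pp: "\<And>x. x \<in> C1 \<Longrightarrow> \<psi> (\<phi> x) = x" and qq: "\<And>y. y \<in> C2 \<Longrightarrow> \<phi> (\<psi> y) = y"
    and padd: "\<And>x y. x \<in> C1 \<Longrightarrow> y \<in> C1 \<Longrightarrow> \<phi> (x + y) = \<phi> x + \<phi> y"
    and pneg: "\<And>x. x \<in> C1 \<Longrightarrow> \<phi> (- x) = - \<phi> x" and p0: "\<phi> 0 = 0"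
    and pmul: "\<And>x y. x \<in> C1 \<Longrightarrow> y \<in> C1 \<Longrightarrow> \<phi> (m1 x y) = m2 (\<phi> x) (\<phi> y)"
  shows "(left_noetherian C2 m2 \<longrightarrow> left_noetherian C1 m1) \<and>
         (right_noetherian C2 m2 \<longrightarrow> right_noetherian C1 m1)"
proof (intro conjI impI)
  assume N2: "left_noetherian C2 m2"
  show "left_noetherian C1 m1" unfolding left_noetherian_def
  proof (intro allI impI)
    fix I :: "nat \<Rightarrow> 'x set" assume asm: "(\<forall>k. left_ideal C1 m1 (I k)) \<and> (\<forall>k. I k \<subseteq> I (Suc k))"
    have IC: "\<And>k. I k \<subseteq> C1" using asm by (simp add: left_ideal_def)
    have "\<forall>k. left_ideal C2 m2 (\<phi> ` I k)"
    proof
      fix k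
      have L: "left_ideal C1 m1 (I k)" using asm by blast
      then have I0: "0 \<in> I k" and Iadd: "\<forall>x\<in>I k. \<forall>y\<in>I k. x + y \<in> I k"
        and Ineg: "\<forall>x\<in>I k. - x \<in> I k" and Imul: "\<forall>r\<in>C1. \<forall>x\<in>I k. m1 r x \<in> I k"
        by (auto simp: left_ideal_def)
      show "left_ideal C2 m2 (\<phi> ` I k)"
        unfolding left_ideal_def
      proof (intro conjI ballI)
        show "\<phi> ` I k \<subseteq> C2" using IC phiC by blast
        show "0 \<in> \<phi> ` I k" by (rule image_eqI[of _ _ 0]) (use I0 p0 in auto)
      next
        fix a b assume "a \<in> \<phi> ` I k" "b \<in> \<phi> ` I k"
        then obtain x y where "x \<in> I k" "y \<in> I k" "a = \<phi> x" "b = \<phi> y" by blast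
        note xy = this
        then have "x \<in> C1" "y \<in> C1" using IC by blast+
        then have "a + b = \<phi> (x + y)" using padd xy by simp
        moreover have "x + y \<in> I k" using Iadd xy by blast
        ultimately show "a + b \<in> \<phi> ` I k" by blast
      next
        fix a assume "a \<in> \<phi> ` I k"
        then obtain x where "x \<in> I k" "a = \<phi> x" by blast
        note xa = this
        then have "x \<in> C1" using IC by blast
        then have "- a = \<phi> (- x)" using pneg xa by simp
        moreover have "- x \<in> I k" using Ineg xa by blast
        ultimately show "- a \<in> \<phi> ` I k" by blast
      next
        fix r a assume r: "r \<in> C2" and "a \<in> \<phi> ` I k"
        then obtain x where x: "x \<in> I k" "a = \<phi> x" by blast
        have xC: "x \<in> C1" using x IC by blast
        have "m2 r a = \<phi> (m1 (\<psi> r) x)" using pmul[OF psiC[OF r] xC] qq[OF r] x by simp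
        then show "m2 r a \<in> \<phi> ` I k" using Imul psiC[OF r] x by blast
      qed
    qed
    moreover have "\<forall>k. \<phi> ` I k \<subseteq> \<phi> ` I (Suc k)" using asm by (simp add: image_mono)
    ultimately obtain N where N: "\<forall>k\<ge>N. \<phi> ` I k = \<phi> ` I N"
      using N2[unfolded left_noetherian_def, rule_format, of "\<lambda>k. \<phi> ` I k"] by blast
    have bk: "\<And>k. \<psi> ` \<phi> ` I k = I k"
    proof -
      fix k
      have "\<psi> ` \<phi> ` I k = (\<lambda>x. \<psi> (\<phi> x)) ` I k" by (simp only: image_image)
      also have "\<dots> = (\<lambda>x. x) ` I k"
      proof (rule image_cong)
        fix x assume "x \<in> I k"
        then have "x \<in> C1" using IC by blast
        then show "\<psi> (\<phi> x) = x" by (rule pp)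
      qed simp
      finally show "\<psi> ` \<phi> ` I k = I k" by simp
    qed
    show "\<exists>N. \<forall>k\<ge>N. I k = I N"
    proof (intro exI allI impI)
      fix k assume "N \<le> k"
      then have e: "\<phi> ` I k = \<phi> ` I N" using N by blast
      have "I k = \<psi> ` \<phi> ` I k" by (rule bk[symmetric])
      also have "\<dots> = \<psi> ` \<phi> ` I N" by (simp only: e)
      also have "\<dots> = I N" by (rule bk)
      finally show "I k = I N" .
    qed
  qed
next
  assume N2: "right_noetherian C2 m2"
  show "right_noetherian C1 m1" unfolding right_noetherian_def
  proof (intro allI impI)
    fix I :: "nat \<Rightarrow> 'x set" assume asm: "(\<forall>k. right_ideal C1 m1 (I k)) \<and> (\<forall>k. I k \<subseteq> I (Suc k))"
    have IC: "\<And>k. I k \<subseteq> C1" using asm by (simp add: right_ideal_def)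
    have "\<forall>k. right_ideal C2 m2 (\<phi> ` I k)"
    proof
      fix k
      have L: "right_ideal C1 m1 (I k)" using asm by blast
      then have I0: "0 \<in> I k" and Iadd: "\<forall>x\<in>I k. \<forall>y\<in>I k. x + y \<in> I k"
        and Ineg: "\<forall>x\<in>I k. - x \<in> I k" and Imul: "\<forall>r\<in>C1. \<forall>x\<in>I k. m1 x r \<in> I k"
        by (auto simp: right_ideal_def)
      show "right_ideal C2 m2 (\<phi> ` I k)"
        unfolding right_ideal_def
      proof (intro conjI ballI)
        show "\<phi> ` I k \<subseteq> C2" using IC phiC by blast
        show "0 \<in> \<phi> ` I k" by (rule image_eqI[of _ _ 0]) (use I0 p0 in auto)
      next
        fix a b assume "a \<in> \<phi> ` I k" "b \<in> \<phi> ` I k"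
        then obtain x y where "x \<in> I k" "y \<in> I k" "a = \<phi> x" "b = \<phi> y" by blast
        note xy = this
        then have "x \<in> C1" "y \<in> C1" using IC by blast+
        then have "a + b = \<phi> (x + y)" using padd xy by simp
        moreover have "x + y \<in> I k" using Iadd xy by blast
        ultimately show "a + b \<in> \<phi> ` I k" by blast
      next
        fix a assume "a \<in> \<phi> ` I k"
        then obtain x where "x \<in> I k" "a = \<phi> x" by blast
        note xa = this
        then have "x \<in> C1" using IC by blast
        then have "- a = \<phi> (- x)" using pneg xa by simp
        moreover have "- x \<in> I k" using Ineg xa by blast
        ultimately show "- a \<in> \<phi> ` I k" by blast
      next
        fix r a assume r: "r \<in> C2" and "a \<in> \<phi> ` I k"
        then obtain x where x: "x \<in> I k" "a = \<phi> x" by blast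
        have xC: "x \<in> C1" using x IC by blast
        have "m2 a r = \<phi> (m1 x (\<psi> r))" using pmul[OF xC psiC[OF r]] qq[OF r] x by simp
        then show "m2 a r \<in> \<phi> ` I k" using Imul psiC[OF r] x by blast
      qed
    qed
    moreover have "\<forall>k. \<phi> ` I k \<subseteq> \<phi> ` I (Suc k)" using asm by (simp add: image_mono)
    ultimately obtain N where N: "\<forall>k\<ge>N. \<phi> ` I k = \<phi> ` I N"
      using N2[unfolded right_noetherian_def, rule_format, of "\<lambda>k. \<phi> ` I k"] by blast
    have bk: "\<And>k. \<psi> ` \<phi> ` I k = I k"
    proof -
      fix k
      have "\<psi> ` \<phi> ` I k = (\<lambda>x. \<psi> (\<phi> x)) ` I k" by (simp only: image_image)
      also have "\<dots> = (\<lambda>x. x) ` I k"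
      proof (rule image_cong)
        fix x assume "x \<in> I k"
        then have "x \<in> C1" using IC by blast
        then show "\<psi> (\<phi> x) = x" by (rule pp)
      qed simp
      finally show "\<psi> ` \<phi> ` I k = I k" by simp
    qed
    show "\<exists>N. \<forall>k\<ge>N. I k = I N"
    proof (intro exI allI impI)
      fix k assume "N \<le> k"
      then have e: "\<phi> ` I k = \<phi> ` I N" using N by blast
      have "I k = \<psi> ` \<phi> ` I k" by (rule bk[symmetric])
      also have "\<dots> = \<psi> ` \<phi> ` I N" by (simp only: e)
      also have "\<dots> = I N" by (rule bk)
      finally show "I k = I N" .
    qed
  qed
qed



lemma lcar_0: "0 \<in> lcarrier i" by (simp add: lcarrier_def)

lemma lcar_add: "(F::int list \<Rightarrow> 'a::ab_group_add) \<in> lcarrier i \<Longrightarrow> G \<in> lcarrier i \<Longrightarrow> F + G \<in> lcarrier i"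
proof -
  assume F: "F \<in> lcarrier i" and G: "G \<in> lcarrier i"
  have "{xs. (F + G) xs \<noteq> 0} \<subseteq> {xs. F xs \<noteq> 0} \<union> {xs. G xs \<noteq> 0}" by auto
  moreover have "finite ({xs. F xs \<noteq> 0} \<union> {xs. G xs \<noteq> 0})" using F G by (simp add: lcarrier_def)
  ultimately have "finite {xs. (F + G) xs \<noteq> 0}" by (rule finite_subset)
  moreover have "\<forall>xs. (F + G) xs \<noteq> 0 \<longrightarrow> length xs = i"
    using F G by (auto simp: lcarrier_def) (metis add.right_neutral)
  ultimately show ?thesis by (simp add: lcarrier_def)
qed

lemma lcar_neg: "(F::int list \<Rightarrow> 'a::ab_group_add) \<in> lcarrier i \<Longrightarrow> - F \<in> lcarrier i"
  by (simp add: lcarrier_def fun_uminus_apply)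

lemma ldec_sc: "F \<in> lcarrier (Suc i) \<Longrightarrow> ldec i F \<in> sc (lcarrier i)"
proof -
  assume F: "F \<in> lcarrier (Suc i)"
  have fin: "finite {ys. F ys \<noteq> 0}" using F by (simp add: lcarrier_def)
  have "ldec i F j \<in> lcarrier i" for j
  proof -
    have "{xs. ldec i F j xs \<noteq> 0} \<subseteq> butlast ` {ys. F ys \<noteq> 0}"
    proof
      fix xs assume "xs \<in> {xs. ldec i F j xs \<noteq> 0}"
      then have "F (xs @ [j]) \<noteq> 0" by (auto simp: ldec_def split: if_splits)
      then show "xs \<in> butlast ` {ys. F ys \<noteq> 0}" by (intro image_eqI[of _ _ "xs @ [j]"]) auto
    qed
    then have "finite {xs. ldec i F j xs \<noteq> 0}" using fin finite_subset by blast
    then show ?thesis by (auto simp: lcarrier_def ldec_def)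
  qed
  moreover have "{j. ldec i F j \<noteq> 0} \<subseteq> last ` {ys. F ys \<noteq> 0}"
  proof
    fix j assume "j \<in> {j. ldec i F j \<noteq> 0}"
    then obtain xs where "F (xs @ [j]) \<noteq> 0" by (auto simp: ldec_def fun_eq_iff split: if_splits)
    then show "j \<in> last ` {ys. F ys \<noteq> 0}" by (intro image_eqI[of _ _ "xs @ [j]"]) auto
  qed
  then have "finite {j. ldec i F j \<noteq> 0}" using fin finite_subset by blast
  ultimately show ?thesis by (simp add: sc_def)
qed

lemma lenc_car: "H \<in> sc (lcarrier i) \<Longrightarrow> lenc i H \<in> lcarrier (Suc i)"
proof -
  assume H: "H \<in> sc (lcarrier i)"
  have "{ys. lenc i H ys \<noteq> 0} \<subseteq> (\<lambda>(j, xs). xs @ [j]) ` (SIGMA j:{j. H j \<noteq> 0}. {xs. H j xs \<noteq> 0})"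
  proof
    fix ys assume "ys \<in> {ys. lenc i H ys \<noteq> 0}"
    then have l: "length ys = Suc i" and h: "H (last ys) (butlast ys) \<noteq> 0"
      by (auto simp: lenc_def split: if_splits)
    then have "H (last ys) \<noteq> 0" by auto
    moreover have "ys = butlast ys @ [last ys]" using l
      by (metis append_butlast_last_id length_greater_0_conv zero_less_Suc)
    ultimately show "ys \<in> (\<lambda>(j, xs). xs @ [j]) ` (SIGMA j:{j. H j \<noteq> 0}. {xs. H j xs \<noteq> 0})"
      using h by (intro image_eqI[of _ _ "(last ys, butlast ys)"]) auto
  qed
  moreover have "finite (SIGMA j:{j. H j \<noteq> 0}. {xs. H j xs \<noteq> 0})"
    using H by (intro finite_SigmaI) (auto simp: sc_def lcarrier_def)
  ultimately have "finite {ys. lenc i H ys \<noteq> 0}" using finite_subset by blast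
  then show ?thesis by (auto simp: lcarrier_def lenc_def)
qed

lemma lenc_ldec: "F \<in> lcarrier (Suc i) \<Longrightarrow> lenc i (ldec i F) = F"
proof
  fix ys assume F: "F \<in> lcarrier (Suc i)"
  show "lenc i (ldec i F) ys = F ys"
  proof (cases "length ys = Suc i")
    case True
    then have "ys = butlast ys @ [last ys]"
      by (metis append_butlast_last_id length_greater_0_conv zero_less_Suc)
    then show ?thesis using True by (simp add: lenc_def ldec_def)
  next
    case False then show ?thesis using F by (auto simp: lenc_def lcarrier_def)
  qed
qed

lemma ldec_lenc: "H \<in> sc (lcarrier i) \<Longrightarrow> ldec i (lenc i H) = H"
proof (intro ext)
  fix j xs assume H: "H \<in> sc (lcarrier i)"
  have "H j \<in> lcarrier i" using H by (simp add: sc_def)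
  then show "ldec i (lenc i H) j xs = H j xs"
    by (auto simp: ldec_def lenc_def lcarrier_def)
qed

lemma ldec_add: "ldec i ((F::int list \<Rightarrow> 'a::ab_group_add) + G) = ldec i F + ldec i G"
  by (auto simp: ldec_def fun_eq_iff)

lemma ldec_neg: "ldec i (- (F::int list \<Rightarrow> 'a::ab_group_add)) = - ldec i F"
  by (auto simp: ldec_def fun_eq_iff fun_uminus_apply)

lemma ldec_0: "ldec i 0 = 0"
  by (auto simp: ldec_def fun_eq_iff)

lemma lenc_0: "lenc i 0 = 0"
  by (auto simp: lenc_def fun_eq_iff)

lemma lmult_0r: "\<forall>x. m x 0 = 0 \<Longrightarrow> lmult m \<sigma> i F 0 = 0"
  by (induction i arbitrary: F) (auto simp: fun_eq_iff ldec_0 skl_zero_r lenc_0)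

lemma lmult_0l: "\<forall>x. m 0 x = 0 \<Longrightarrow> lmult m \<sigma> i 0 F = 0"
  by (induction i arbitrary: F) (auto simp: fun_eq_iff ldec_0 skl_zero_l lenc_0)


lemma lhat_bij: "bij \<sigma> \<Longrightarrow> bij (lhat \<sigma>)"
proof -
  assume b: "bij \<sigma>"
  have a1: "\<And>x. inv \<sigma> (\<sigma> x) = x" using b by (simp add: bij_is_inj)
  have a2: "\<And>x. \<sigma> (inv \<sigma> x) = x" using b by (simp add: bij_is_surj surj_f_inv_f)
  show ?thesis
    by (rule o_bij[where g="lhat (inv \<sigma>)"]) (auto simp: fun_eq_iff lhat_def a1 a2)
qed

lemma lhat_inv: "bij \<sigma> \<Longrightarrow> inv (lhat \<sigma>) = lhat (inv \<sigma>)"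
proof -
  assume b: "bij \<sigma>"
  have a1: "\<And>x. inv \<sigma> (\<sigma> x) = x" using b by (simp add: bij_is_inj)
  have a2: "\<And>x. \<sigma> (inv \<sigma> x) = x" using b by (simp add: bij_is_surj surj_f_inv_f)
  show ?thesis by (rule inv_equality) (auto simp: fun_eq_iff lhat_def a1 a2)
qed

lemma lhat_car: "\<sigma> 0 = 0 \<Longrightarrow> F \<in> lcarrier i \<Longrightarrow> lhat \<sigma> F \<in> lcarrier i"
proof -
  assume s0: "\<sigma> 0 = 0" and F: "F \<in> lcarrier i"
  have "{xs. lhat \<sigma> F xs \<noteq> 0} \<subseteq> {xs. F xs \<noteq> 0}" using s0 by (auto simp: lhat_def)
  then show ?thesis using F by (auto simp: lcarrier_def lhat_def intro: finite_subset)
qed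

lemma lhat_0: "\<sigma> 0 = 0 \<Longrightarrow> lhat \<sigma> 0 = 0"
  by (simp add: lhat_def fun_eq_iff)

lemma sgl_sc': "0 \<in> C \<Longrightarrow> a \<in> C \<Longrightarrow> sgl k a \<in> sc C"
proof -
  assume C0: "0 \<in> C" and a: "a \<in> C"
  have "{j. sgl k a j \<noteq> 0} \<subseteq> {k}" by (auto simp: sgl_def)
  then show ?thesis using a C0 by (auto simp: sc_def sgl_def intro: finite_subset)
qed

fun onel :: "'a \<Rightarrow> nat \<Rightarrow> (int list \<Rightarrow> 'a::zero)" where
  "onel e 0 = (\<lambda>xs. if xs = [] then e else 0)"
| "onel e (Suc i) = lenc i (sgl 0 (onel e i))"

lemma onel_vals: "onel e i xs = 0 \<or> onel e i xs = e"
  by (induction i arbitrary: xs) (auto simp: lenc_def sgl_def)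

lemma onel_car: "onel e i \<in> lcarrier i"
proof (induction i)
  case 0
  have "{xs. onel e 0 xs \<noteq> 0} \<subseteq> {[]}" by auto
  then show ?case by (auto simp: lcarrier_def intro: finite_subset)
next
  case (Suc i)
  then show ?case by (simp add: lenc_car sgl_sc' lcar_0)
qed

lemma lhat_onel: "\<sigma> 0 = 0 \<Longrightarrow> \<sigma> e = e \<Longrightarrow> lhat \<sigma> (onel e i) = onel e i"
proof
  fix xs assume "\<sigma> 0 = 0" "\<sigma> e = e"
  then show "lhat \<sigma> (onel e i) xs = onel e i xs"
    using onel_vals[of e i xs] by (auto simp: lhat_def)
qed

definition lvl :: "('a::ab_group_add \<Rightarrow> 'a \<Rightarrow> 'a) \<Rightarrow> (nat \<Rightarrow> 'a \<Rightarrow> 'a) \<Rightarrow> 'a \<Rightarrow> nat \<Rightarrow> bool" where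
  "lvl m \<sigma> e i \<longleftrightarrow> (\<forall>x\<in>lcarrier i. \<forall>y\<in>lcarrier i. lmult m \<sigma> i x y \<in> lcarrier i) \<and>
     (\<forall>x\<in>lcarrier i. lmult m \<sigma> i (onel e i) x = x \<and> lmult m \<sigma> i x (onel e i) = x)"

lemma nar_0: "nonassoc_ring m one \<Longrightarrow> (\<forall>x. m x 0 = 0) \<and> (\<forall>x. m 0 x = 0)"
proof -
  assume N: "nonassoc_ring m one"
  have "\<And>x. m x (0 + 0) = m x 0 + m x 0" "\<And>x. m (0 + 0) x = m 0 x + m 0 x"
    using N unfolding nonassoc_ring_def by blast+
  then show ?thesis by simp
qed

lemma add_0: "additive s \<Longrightarrow> s 0 = 0"
proof -
  assume "additive s"
  then have "s (0 + 0) = s 0 + s 0" unfolding additive_def by blast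
  then show ?thesis by simp
qed

lemma gen_at:
  assumes N: "nonassoc_ring m one" and b: "bij (\<sigma> i)" and a: "additive (\<sigma> i)"
    and o: "\<sigma> i one = one" and L: "lvl m \<sigma> one i"
  shows "gen (lhat (\<sigma> i)) (lcarrier i) (onel one i) (lmult m \<sigma> i)"
proof -
  have s0: "\<sigma> i 0 = 0" using add_0[OF a] .
  have is0: "inv (\<sigma> i) 0 = 0" using s0 b by (metis bij_is_inj inv_f_f)
  show ?thesis
    unfolding gen_def sbij_def gen_axioms_def
  proof (intro conjI allI ballI impI)
    show "bij (lhat (\<sigma> i))" using lhat_bij[OF b] .
    show "lhat (\<sigma> i) 0 = 0" using lhat_0[of "\<sigma> i", OF s0] .
    show "lhat (\<sigma> i) (onel one i) = onel one i" using lhat_onel[of "\<sigma> i", OF s0 o] .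
  next
    fix x :: "int list \<Rightarrow> 'a" assume "x \<in> lcarrier i"
    then show "lhat (\<sigma> i) x \<in> lcarrier i" by (rule lhat_car[of "\<sigma> i", OF s0])
  next
    fix x :: "int list \<Rightarrow> 'a" assume "x \<in> lcarrier i"
    then show "inv (lhat (\<sigma> i)) x \<in> lcarrier i"
      by (simp add: lhat_inv[OF b] lhat_car[of "inv (\<sigma> i)", OF is0])
  next
    show "0 \<in> lcarrier i" by (rule lcar_0)
    show "onel one i \<in> lcarrier i" by (rule onel_car)
  next
    fix x y :: "int list \<Rightarrow> 'a" assume "x \<in> lcarrier i" "y \<in> lcarrier i"
    then show "x + y \<in> lcarrier i" by (rule lcar_add)
  next
    fix x :: "int list \<Rightarrow> 'a" assume "x \<in> lcarrier i"
    then show "- x \<in> lcarrier i" by (rule lcar_neg)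
  next
    fix x y :: "int list \<Rightarrow> 'a" assume "x \<in> lcarrier i" "y \<in> lcarrier i"
    then show "lmult m \<sigma> i x y \<in> lcarrier i" using L by (simp add: lvl_def)
  next
    fix x :: "int list \<Rightarrow> 'a"
    show "lmult m \<sigma> i 0 x = 0" using lmult_0l nar_0[OF N] by blast
    show "lmult m \<sigma> i x 0 = 0" using lmult_0r nar_0[OF N] by blast
  next
    fix x :: "int list \<Rightarrow> 'a" assume "x \<in> lcarrier i"
    then show "lmult m \<sigma> i (onel one i) x = x" "lmult m \<sigma> i x (onel one i) = x"
      using L by (simp_all add: lvl_def)
  qed
qed


lemma lcar0_single: "(\<lambda>xs. if xs = [] then (a::'a::zero) else 0) \<in> lcarrier 0"
proof -
  have "{xs. (if xs = [] then a else 0) \<noteq> 0} \<subseteq> {[]}" by auto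
  then show ?thesis by (auto simp: lcarrier_def intro: finite_subset)
qed

lemma lcar0_eq: "F \<in> lcarrier 0 \<Longrightarrow> (\<lambda>xs. if xs = [] then F [] else 0) = F"
  by (auto simp: lcarrier_def fun_eq_iff)

lemma lvl_0:
  assumes N: "nonassoc_ring m one" shows "lvl m \<sigma> one 0"
  unfolding lvl_def
proof (intro conjI ballI)
  fix x y :: "int list \<Rightarrow> 'a" assume "x \<in> lcarrier 0" "y \<in> lcarrier 0"
  show "lmult m \<sigma> 0 x y \<in> lcarrier 0" using lcar0_single[of "m (x []) (y [])"] by simp
next
  fix x :: "int list \<Rightarrow> 'a" assume x: "x \<in> lcarrier 0"
  have e: "\<forall>a. m one a = a \<and> m a one = a" using N by (simp add: nonassoc_ring_def)
  have "lmult m \<sigma> 0 (onel one 0) x = (\<lambda>xs. if xs = [] then x [] else 0)" using e by (auto simp: fun_eq_iff)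
  then show "lmult m \<sigma> 0 (onel one 0) x = x" using lcar0_eq[OF x] by simp
  have "lmult m \<sigma> 0 x (onel one 0) = (\<lambda>xs. if xs = [] then x [] else 0)" using e by (auto simp: fun_eq_iff)
  then show "lmult m \<sigma> 0 x (onel one 0) = x" using lcar0_eq[OF x] by simp
qed

lemma lvl_Suc:
  assumes G: "gen (lhat (\<sigma> i)) (lcarrier i) (onel one i) (lmult m \<sigma> i)"
  shows "lvl m \<sigma> one (Suc i)"
proof -
  interpret G: gen "lhat (\<sigma> i)" "lcarrier i" "onel one i" "lmult m \<sigma> i" by (rule G)
  have d1: "ldec i (onel one (Suc i)) = sgl 0 (onel one i)"
    by (simp add: ldec_lenc G.sc_e)
  show ?thesis
    unfolding lvl_def
  proof (intro conjI ballI)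
    fix x y :: "int list \<Rightarrow> 'a" assume x: "x \<in> lcarrier (Suc i)" and y: "y \<in> lcarrier (Suc i)"
    show "lmult m \<sigma> (Suc i) x y \<in> lcarrier (Suc i)"
      using lenc_car[OF G.gen_closed[OF ldec_sc[OF x] ldec_sc[OF y]]] by simp
  next
    fix x :: "int list \<Rightarrow> 'a" assume x: "x \<in> lcarrier (Suc i)"
    show "lmult m \<sigma> (Suc i) (onel one (Suc i)) x = x"
      using G.gen_lid[OF ldec_sc[OF x]] lenc_ldec[OF x] d1
      by (simp del: onel.simps)
    show "lmult m \<sigma> (Suc i) x (onel one (Suc i)) = x"
      using G.gen_rid[OF ldec_sc[OF x]] lenc_ldec[OF x] d1
      by (simp del: onel.simps)
  qed
qed

lemma main_ind:
  fixes m :: "'a::ab_group_add \<Rightarrow> 'a \<Rightarrow> 'a"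
  assumes N: "nonassoc_ring m one"
    and S: "\<forall>i<n. bij (\<sigma> i) \<and> additive (\<sigma> i) \<and> \<sigma> i one = one"
  shows "i \<le> n \<Longrightarrow> lvl m \<sigma> one i \<and>
    (left_noetherian (UNIV :: 'a set) m \<longrightarrow> left_noetherian (lcarrier i) (lmult m \<sigma> i)) \<and>
    (right_noetherian (UNIV :: 'a set) m \<longrightarrow> right_noetherian (lcarrier i) (lmult m \<sigma> i))"
proof (induction i)
  case 0
  have T: "(left_noetherian (UNIV :: 'a set) m \<longrightarrow> left_noetherian (lcarrier 0) (lmult m \<sigma> 0)) \<and>
    (right_noetherian (UNIV :: 'a set) m \<longrightarrow> right_noetherian (lcarrier 0) (lmult m \<sigma> 0))"
  proof (rule transfer_left[where \<phi>="\<lambda>F. F []" and \<psi>="\<lambda>a xs. if xs = [] then a else 0"])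
    show "\<And>y. y \<in> UNIV \<Longrightarrow> (\<lambda>xs. if xs = [] then y else 0) \<in> lcarrier 0" by (rule lcar0_single)
    show "\<And>x. x \<in> lcarrier 0 \<Longrightarrow> (\<lambda>xs. if xs = [] then x [] else 0) = x" by (rule lcar0_eq)
  qed auto
  then show ?case using lvl_0[OF N] by blast
next
  case (Suc i)
  then have i: "i < n" and IH: "lvl m \<sigma> one i \<and>
    (left_noetherian (UNIV :: 'a set) m \<longrightarrow> left_noetherian (lcarrier i) (lmult m \<sigma> i)) \<and>
    (right_noetherian (UNIV :: 'a set) m \<longrightarrow> right_noetherian (lcarrier i) (lmult m \<sigma> i))" by auto
  have Gi: "gen (lhat (\<sigma> i)) (lcarrier i) (onel one i) (lmult m \<sigma> i)"
    using gen_at[OF N _ _ _ conjunct1[OF IH]] S i by blast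
  interpret G: gen "lhat (\<sigma> i)" "lcarrier i" "onel one i" "lmult m \<sigma> i" by (rule Gi)
  have T: "(left_noetherian (sc (lcarrier i)) (skl_mult (lmult m \<sigma> i) (lhat (\<sigma> i))) \<longrightarrow>
            left_noetherian (lcarrier (Suc i)) (lmult m \<sigma> (Suc i))) \<and>
    (right_noetherian (sc (lcarrier i)) (skl_mult (lmult m \<sigma> i) (lhat (\<sigma> i))) \<longrightarrow>
            right_noetherian (lcarrier (Suc i)) (lmult m \<sigma> (Suc i)))"
  proof (rule transfer_left[where \<phi>="ldec i" and \<psi>="lenc i"])
    show "\<And>x. x \<in> lcarrier (Suc i) \<Longrightarrow> ldec i x \<in> sc (lcarrier i)" by (rule ldec_sc)
    show "\<And>y. y \<in> sc (lcarrier i) \<Longrightarrow> lenc i y \<in> lcarrier (Suc i)" by (rule lenc_car)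
    show "\<And>x. x \<in> lcarrier (Suc i) \<Longrightarrow> lenc i (ldec i x) = x" by (rule lenc_ldec)
    show "\<And>y. y \<in> sc (lcarrier i) \<Longrightarrow> ldec i (lenc i y) = y" by (rule ldec_lenc)
    show "\<And>x y :: int list \<Rightarrow> 'a. ldec i (x + y) = ldec i x + ldec i y" by (rule ldec_add)
    show "\<And>x :: int list \<Rightarrow> 'a. ldec i (- x) = - ldec i x" by (rule ldec_neg)
    show "ldec i (0 :: int list \<Rightarrow> 'a) = 0" by (rule ldec_0)
    show "\<And>x y. x \<in> lcarrier (Suc i) \<Longrightarrow> y \<in> lcarrier (Suc i) \<Longrightarrow>
      ldec i (lmult m \<sigma> (Suc i) x y) = skl_mult (lmult m \<sigma> i) (lhat (\<sigma> i)) (ldec i x) (ldec i y)"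
      using ldec_lenc[OF G.gen_closed[OF ldec_sc ldec_sc]] by simp
  qed
  show ?case using T IH G.left_step G.right_step lvl_Suc[OF Gi] by blast
qed


theorem corollary11:
  fixes m :: "'a::ab_group_add \<Rightarrow> 'a \<Rightarrow> 'a" and one :: 'a
    and \<sigma> :: "nat \<Rightarrow> 'a \<Rightarrow> 'a" and n :: nat
  assumes "nonassoc_ring m one"
    and "n \<ge> 1"
    and "\<forall>i<n. bij (\<sigma> i) \<and> additive (\<sigma> i) \<and> \<sigma> i one = one"
    and "\<forall>i<n. \<forall>j<n. \<sigma> i \<circ> \<sigma> j = \<sigma> j \<circ> \<sigma> i"
  shows "(left_noetherian (UNIV :: 'a set) m \<longrightarrow> left_noetherian (lcarrier n) (lmult m \<sigma> n)) \<and>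
         (right_noetherian (UNIV :: 'a set) m \<longrightarrow> right_noetherian (lcarrier n) (lmult m \<sigma> n))"
  using main_ind[OF assms(1) assms(3), of n] by blast

end
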